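(* Let $f\in\mathbb Z[x,x^{-1}]$ be a Laurent polynomial with integer coefficients which is hyperbolic (no complex root on the unit circle). Then $f\cdot\mathbb Z_{ac}(x)\cap\mathbb Z_{ac}[x)=f\cdot\mathbb Z_{ac}[x)$.
   Context: A formal Laurent series $\sum_{n\in\mathbb Z}c_nx^n$ is almost convergent if $\limsup_{n\to\infty}|c_n|^{1/n}\le1$ and $\limsup_{n\to\infty}|c_{-n}|^{1/n}\le1$. $\mathbb Z_{ac}(x)$ denotes the ring (under formal multiplication where defined; here products with Laurent polynomials) of almost convergent two-sided Laurent series with integer coefficients, and $\mathbb Z_{ac}[x)$ the subset of those of the form $\sum_{n\ge m}a_nx^n$ for some $m\in\mathbb Z$ (only finitely many negative powers). *)

theory Defs
  imports "HOL-Analysis.Analysis"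
begin

text \<open>Two-sided formal Laurent series with integer coefficients are modelled as
  coefficient functions c :: int => int (c n is the coefficient of x^n).\<close>

definition laurent_poly :: "(int \<Rightarrow> int) \<Rightarrow> bool" where
  "laurent_poly f \<longleftrightarrow> finite {k. f k \<noteq> 0}"

definition laurent_eval :: "(int \<Rightarrow> int) \<Rightarrow> complex \<Rightarrow> complex" where
  "laurent_eval f z = (\<Sum>k\<in>{k. f k \<noteq> 0}. of_int (f k) * z powi k)"

definition hyperbolic :: "(int \<Rightarrow> int) \<Rightarrow> bool" where
  "hyperbolic f \<longleftrightarrow> (\<forall>z::complex. norm z = 1 \<longrightarrow> laurent_eval f z \<noteq> 0)"

definition laurent_mult :: "(int \<Rightarrow> int) \<Rightarrow> (int \<Rightarrow> int) \<Rightarrow> (int \<Rightarrow> int)" where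
  "laurent_mult f g = (\<lambda>n. \<Sum>k\<in>{k. f k \<noteq> 0}. f k * g (n - k))"

definition almost_convergent :: "(int \<Rightarrow> int) \<Rightarrow> bool" where
  "almost_convergent c \<longleftrightarrow>
     limsup (\<lambda>n::nat. ereal (root n \<bar>real_of_int (c (int n))\<bar>)) \<le> 1 \<and>
     limsup (\<lambda>n::nat. ereal (root n \<bar>real_of_int (c (- int n))\<bar>)) \<le> 1"

definition Zac :: "(int \<Rightarrow> int) set" where
  "Zac = {c. almost_convergent c}"

definition Zac_right :: "(int \<Rightarrow> int) set" where
  "Zac_right = {c. almost_convergent c \<and> (\<exists>m. \<forall>n<m. c n = 0)}"

end

theory Submission
  imports Defs "HOL-Computational_Algebra.Fundamental_Theorem_Algebra" begin


definition subexp :: "(int \<Rightarrow> complex) \<Rightarrow> bool" where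
  "subexp u \<longleftrightarrow> (\<forall>\<rho>>1. \<exists>C. \<forall>n. norm (u n) \<le> C * \<rho> ^ nat \<bar>n\<bar>)"

definition negdecay :: "(int \<Rightarrow> complex) \<Rightarrow> bool" where
  "negdecay v \<longleftrightarrow> (\<exists>C r. 0 \<le> r \<and> r < 1 \<and> (\<forall>k::nat. norm (v (- int k)) \<le> C * r ^ k))"

definition pmul :: "complex poly \<Rightarrow> (int \<Rightarrow> complex) \<Rightarrow> int \<Rightarrow> complex" where
  "pmul p u n = (\<Sum>j\<le>degree p. coeff p j * u (n - int j))"

lemma pmul_alt:
  assumes "degree p < N"
  shows "pmul p u n = (\<Sum>j<N. coeff p j * u (n - int j))"
  unfolding pmul_def
proof (rule sum.mono_neutral_left)
  show "\<forall>i\<in>{..<N} - {..degree p}. coeff p i * u (n - int i) = 0"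
    by (auto simp: coeff_eq_0)
qed (use assms in auto)

lemma pmul_const: "pmul [:c:] u n = c * u n"
  unfolding pmul_def by simp

lemma pmul_lin: "pmul ([:-a,1:] * q) u n = pmul q u (n-1) - a * pmul q u n"
proof -
  define M where "M = Suc (degree q)"
  have e: "[:-a,1:] * q = pCons 0 q - smult a q" by simp
  have d: "degree ([:-a,1:] * q) < Suc M"
    using degree_mult_le[of "[:-a,1:]" q] unfolding M_def by simp
  have "pmul ([:-a,1:] * q) u n = (\<Sum>j<Suc M. coeff ([:-a,1:] * q) j * u (n - int j))"
    by (rule pmul_alt[OF d])
  also have "\<dots> = (\<Sum>j<Suc M. coeff (pCons 0 q) j * u (n - int j)) - a * (\<Sum>j<Suc M. coeff q j * u (n - int j))"
    unfolding e by (simp add: algebra_simps sum_subtractf sum_distrib_left)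
  also have "(\<Sum>j<Suc M. coeff (pCons 0 q) j * u (n - int j)) = (\<Sum>j<M. coeff q j * u (n - 1 - int j))"
    by (subst sum.lessThan_Suc_shift) (simp add: algebra_simps)
  also have "\<dots> = pmul q u (n-1)" by (rule pmul_alt[symmetric]) (simp add: M_def)
  also have "(\<Sum>j<Suc M. coeff q j * u (n - int j)) = pmul q u n" by (rule pmul_alt[symmetric]) (simp add: M_def)
  finally show ?thesis .
qed

lemma subexp_C_nonneg:
  assumes "\<And>n. norm (u n) \<le> C * \<rho> ^ nat \<bar>n\<bar>"
  shows "C \<ge> 0"
  using assms[of 0] by simp (meson norm_ge_zero order_trans)

lemma subexp_pmul:
  assumes "subexp u" shows "subexp (pmul p u)"
  unfolding subexp_def
proof (intro allI impI)
  fix \<rho> :: real assume r: "\<rho> > 1"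
  obtain C where C: "\<And>n. norm (u n) \<le> C * \<rho> ^ nat \<bar>n\<bar>" using assms r unfolding subexp_def by blast
  have C0: "C \<ge> 0" by (rule subexp_C_nonneg[OF C])
  define D where "D = (\<Sum>j\<le>degree p. norm (coeff p j) * (C * \<rho> ^ j))"
  show "\<exists>C. \<forall>n. norm (pmul p u n) \<le> C * \<rho> ^ nat \<bar>n\<bar>"
  proof (intro exI allI)
    fix n
    have "norm (pmul p u n) \<le> (\<Sum>j\<le>degree p. norm (coeff p j * u (n - int j)))"
      unfolding pmul_def by (rule norm_sum)
    also have "\<dots> \<le> (\<Sum>j\<le>degree p. norm (coeff p j) * (C * \<rho> ^ j) * \<rho> ^ nat \<bar>n\<bar>)"
    proof (rule sum_mono)
      fix j assume "j \<in> {..degree p}"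
      have "\<rho> ^ nat \<bar>n - int j\<bar> \<le> \<rho> ^ (j + nat \<bar>n\<bar>)"
        using r by (intro power_increasing) auto
      then have "C * \<rho> ^ nat \<bar>n - int j\<bar> \<le> C * \<rho> ^ (j + nat \<bar>n\<bar>)"
        using C0 by (intro mult_left_mono)
      then have "norm (u (n - int j)) \<le> C * \<rho> ^ (j + nat \<bar>n\<bar>)"
        using C[of "n - int j"] by linarith
      then have "norm (u (n - int j)) \<le> C * \<rho> ^ j * \<rho> ^ nat \<bar>n\<bar>"
        by (simp add: power_add mult.assoc)
      then show "norm (coeff p j * u (n - int j)) \<le> norm (coeff p j) * (C * \<rho> ^ j) * \<rho> ^ nat \<bar>n\<bar>"
        unfolding norm_mult mult.assoc by (rule mult_left_mono) auto
    qed
    also have "\<dots> = D * \<rho> ^ nat \<bar>n\<bar>" unfolding D_def by (simp add: sum_distrib_right)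
    finally show "norm (pmul p u n) \<le> D * \<rho> ^ nat \<bar>n\<bar>" .
  qed
qed


lemma geom_bound:
  fixes q :: real assumes "0 \<le> q" "q < 1"
  shows "(\<Sum>j<K. q^j) \<le> 1 / (1 - q)"
proof -
  have "(\<Sum>j<K. q^j) = (1 - q^K) / (1 - q)" using assms by (simp add: sum_gp_strict)
  also have "\<dots> \<le> 1 / (1 - q)" using assms by (intro divide_right_mono) auto
  finally show ?thesis .
qed

lemma step_small:
  fixes \<alpha> :: complex
  assumes a: "norm \<alpha> < 1" and v: "negdecay (\<lambda>n. w (n-1) - \<alpha> * w n)"
  shows "negdecay w"
proof -
  obtain C r where r0: "0 \<le> r" "r < 1" and C: "\<And>k::nat. norm (w (- int k - 1) - \<alpha> * w (- int k)) \<le> C * r^k"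
    using v unfolding negdecay_def by auto
  have C0: "C \<ge> 0"
  proof -
    have "norm (w (- int 0 - 1) - \<alpha> * w (- int 0)) \<le> C" using C[of 0] by simp
    then show ?thesis by (rule order_trans[OF norm_ge_zero])
  qed
  define r' where "r' = max r ((1 + norm \<alpha>)/2)"
  have r'1: "r' < 1" and r'a: "norm \<alpha> < r'" and r'r: "r \<le> r'" and r'0: "r' \<ge> 0"
    using a r0 unfolding r'_def by (auto simp: less_max_iff_disj)
  define D where "D = norm (w 0) + C / (r' - norm \<alpha>)"
  have key: "C \<le> D * (r' - norm \<alpha>)"
  proof -
    have "D * (r' - norm \<alpha>) = norm (w 0) * (r' - norm \<alpha>) + C"
      unfolding D_def using r'a by (simp add: field_simps)
    moreover have "norm (w 0) * (r' - norm \<alpha>) \<ge> 0" using r'a by simp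
    ultimately show ?thesis by linarith
  qed
  have D0: "norm (w 0) \<le> D" unfolding D_def using C0 r'a by simp
  have bnd: "norm (w (- int k)) \<le> D * r'^k" for k
  proof (induction k)
    case 0 then show ?case using D0 by simp
  next
    case (Suc k)
    have e1: "- int (Suc k) = - int k - 1" by simp
    have eq: "w (- int (Suc k)) = (w (- int k - 1) - \<alpha> * w (- int k)) + \<alpha> * w (- int k)"
      unfolding e1 by simp
    have "norm (w (- int (Suc k))) \<le> C * r^k + norm \<alpha> * (D * r'^k)"
      unfolding eq using C[of k] Suc.IH
      by (smt (verit, best) mult_left_mono norm_ge_zero norm_mult norm_triangle_ineq)
    also have "\<dots> \<le> C * r'^k + norm \<alpha> * (D * r'^k)"
      using C0 r0 r'r by (simp add: mult_left_mono power_mono)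
    also have "\<dots> = (C + norm \<alpha> * D) * r'^k" by (simp add: algebra_simps)
    also have "\<dots> \<le> (D * r') * r'^k"
      using key r'0 by (intro mult_right_mono) (auto simp: algebra_simps)
    finally show ?case by (simp add: mult.assoc)
  qed
  show ?thesis unfolding negdecay_def using bnd r'0 r'1 by blast
qed

lemma step_big:
  fixes \<alpha> :: complex
  assumes a: "norm \<alpha> > 1" and s: "subexp w" and v: "negdecay (\<lambda>n. w (n-1) - \<alpha> * w n)"
  shows "negdecay w"
proof -
  obtain C r where r0: "0 \<le> r" "r < 1" and C: "\<And>k::nat. norm (w (- int k - 1) - \<alpha> * w (- int k)) \<le> C * r^k"
    using v unfolding negdecay_def by auto
  have C0: "C \<ge> 0"
  proof -
    have "norm (w (- int 0 - 1) - \<alpha> * w (- int 0)) \<le> C" using C[of 0] by simp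
    then show ?thesis by (rule order_trans[OF norm_ge_zero])
  qed
  define \<rho> where "\<rho> = (1 + norm \<alpha>) / 2"
  have rho1: "\<rho> > 1" and rhoa: "\<rho> < norm \<alpha>" using a unfolding \<rho>_def by auto
  obtain C2 where C2: "\<And>n. norm (w n) \<le> C2 * \<rho> ^ nat \<bar>n\<bar>" using s rho1 unfolding subexp_def by blast
  have C20: "C2 \<ge> 0" by (rule subexp_C_nonneg[OF C2])
  have a0: "\<alpha> \<noteq> 0" using a by auto
  define W where "W k = w (- int k)" for k
  define V where "V k = w (- int k - 1) - \<alpha> * w (- int k)" for k
  have WV: "W (Suc k) = V k + \<alpha> * W k" for k
  proof -
    have e1: "- int (Suc k) = - int k - 1" by simp
    show ?thesis unfolding W_def V_def e1 by simp
  qed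
  have ident: "W k = W (k+K) / \<alpha>^K - (\<Sum>j<K. V (k+j) / \<alpha>^(j+1))" for k K
  proof (induction K)
    case 0 then show ?case by simp
  next
    case (Suc K)
    have "W (k+K) / \<alpha>^K = W (k + Suc K) / \<alpha>^(Suc K) - V (k+K) / \<alpha>^(Suc K)"
      using WV[of "k+K"] a0 by (simp add: field_simps)
    then have "W k = (W (k + Suc K) / \<alpha>^(Suc K) - V (k+K) / \<alpha>^(Suc K)) - (\<Sum>j<K. V (k+j) / \<alpha>^(j+1))"
      using Suc.IH by simp
    also have "\<dots> = W (k + Suc K) / \<alpha>^(Suc K) - (\<Sum>j<Suc K. V (k+j) / \<alpha>^(j+1))"
      by (simp only: sum.lessThan_Suc) (simp add: algebra_simps)
    finally show ?case .
  qed
  define q where "q = 1 / norm \<alpha>"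
  have q0: "0 \<le> q" and q1: "q < 1" using a unfolding q_def by (auto simp: divide_less_eq)
  define E where "E = C / (norm \<alpha> - 1)"
  have bnd: "norm (W k) \<le> C2 * \<rho>^k * (\<rho> / norm \<alpha>)^K + E * r^k" for k K
  proof -
    have t1: "norm (W (k+K) / \<alpha>^K) \<le> C2 * \<rho>^k * (\<rho> / norm \<alpha>)^K"
    proof -
      have "norm (W (k+K)) \<le> C2 * \<rho>^(k+K)" using C2[of "- int (k+K)"] unfolding W_def by (simp add: nat_add_distrib add.commute)
      then have "norm (W (k+K)) / norm \<alpha> ^ K \<le> C2 * \<rho>^(k+K) / norm \<alpha> ^ K"
        by (intro divide_right_mono) auto
      then show ?thesis by (simp add: norm_divide norm_power power_add power_divide)
    qed
    have t2: "norm (\<Sum>j<K. V (k+j) / \<alpha>^(j+1)) \<le> E * r^k"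
    proof -
      have "norm (\<Sum>j<K. V (k+j) / \<alpha>^(j+1)) \<le> (\<Sum>j<K. norm (V (k+j) / \<alpha>^(j+1)))"
        by (rule norm_sum)
      also have "\<dots> \<le> (\<Sum>j<K. C * r^k * q * q^j)"
      proof (rule sum_mono)
        fix j
        have "norm (V (k+j)) \<le> C * r^k"
        proof -
          have "r^(k+j) \<le> r^k" using r0 by (simp add: power_add mult_left_le power_le_one)
          then have "C * r^(k+j) \<le> C * r^k" using C0 by (intro mult_left_mono)
          then show ?thesis using C[of "k+j"] unfolding V_def by simp
        qed
        then have "norm (V (k+j)) / norm \<alpha> ^ (j+1) \<le> C * r^k / norm \<alpha> ^ (j+1)"
          by (intro divide_right_mono) auto
        moreover have "norm (V (k+j) / \<alpha>^(j+1)) = norm (V (k+j)) / norm \<alpha> ^ (j+1)"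
          by (simp only: norm_divide norm_power)
        moreover have "C * r^k / norm \<alpha> ^ (j+1) = C * r^k * q * q^j"
          unfolding q_def by (simp add: power_divide)
        ultimately show "norm (V (k+j) / \<alpha>^(j+1)) \<le> C * r^k * q * q^j" by simp
      qed
      also have "\<dots> = C * r^k * q * (\<Sum>j<K. q^j)" by (simp add: sum_distrib_left)
      also have "\<dots> \<le> C * r^k * q * (1 / (1 - q))"
        using geom_bound[OF q0 q1] C0 r0 q0 by (intro mult_left_mono) auto
      also have "\<dots> = E * r^k" unfolding E_def q_def using a a0 by (simp add: field_simps)
      finally show ?thesis .
    qed
    have "norm (W k) \<le> norm (W (k+K) / \<alpha>^K) + norm (\<Sum>j<K. V (k+j) / \<alpha>^(j+1))"
      unfolding ident[of k K] by (rule norm_triangle_ineq4)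
    then show ?thesis using t1 t2 by linarith
  qed
  have "norm (W k) \<le> E * r^k" for k
  proof (rule LIMSEQ_le_const)
    have "(\<lambda>K. (\<rho> / norm \<alpha>)^K) \<longlonglongrightarrow> 0"
      using rho1 rhoa by (intro LIMSEQ_power_zero) (auto simp: divide_less_eq)
    then have "(\<lambda>K. C2 * \<rho>^k * (\<rho> / norm \<alpha>)^K + E * r^k) \<longlonglongrightarrow> C2 * \<rho>^k * 0 + E * r^k"
      by (rule tendsto_add[OF tendsto_mult[OF tendsto_const] tendsto_const])
    then show "(\<lambda>K. C2 * \<rho>^k * (\<rho> / norm \<alpha>)^K + E * r^k) \<longlonglongrightarrow> E * r^k" by simp
    show "\<exists>N. \<forall>K\<ge>N. norm (W k) \<le> C2 * \<rho>^k * (\<rho> / norm \<alpha>)^K + E * r^k"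
      using bnd by blast
  qed
  then show ?thesis unfolding negdecay_def W_def using r0 by blast
qed


lemma negdecay_poly:
  "p \<noteq> 0 \<Longrightarrow> (\<forall>z. norm z = 1 \<longrightarrow> poly p z \<noteq> 0) \<Longrightarrow> subexp u \<Longrightarrow> negdecay (pmul p u) \<Longrightarrow> negdecay u"
proof (induction "degree p" arbitrary: p rule: less_induct)
  case less
  show ?case
  proof (cases "degree p = 0")
    case True
    then obtain c where pc: "p = [:c:]" by (metis degree_eq_zeroE)
    with less.prems have c0: "c \<noteq> 0" by auto
    from less.prems(4) obtain C r where r: "0 \<le> r" "r < 1" and C: "\<And>k::nat. norm (c * u (- int k)) \<le> C * r^k"
      unfolding negdecay_def pc pmul_const by blast
    have "norm (u (- int k)) \<le> (C / norm c) * r^k" for k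
      using C[of k] c0 by (simp add: norm_mult field_simps)
    then show ?thesis unfolding negdecay_def using r by blast
  next
    case False
    then have "\<not> constant (poly p)" by (simp add: constant_degree)
    then obtain \<alpha> where root: "poly p \<alpha> = 0" using fundamental_theorem_of_algebra by blast
    then have "[:-\<alpha>,1:] dvd p" by (simp add: poly_eq_0_iff_dvd)
    then obtain q where pq: "p = [:-\<alpha>,1:] * q" by (elim dvdE)
    have q0: "q \<noteq> 0" using pq less.prems(1) by auto
    have dq: "degree q < degree p"
    proof -
      have "[:-\<alpha>,1:] \<noteq> 0" by simp
      then have "degree p = degree [:-\<alpha>,1:] + degree q" unfolding pq using q0 by (rule degree_mult_eq)
      then show ?thesis by simp
    qed
    have qroots: "\<forall>z. norm z = 1 \<longrightarrow> poly q z \<noteq> 0" using less.prems(2) pq by auto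
    have a1: "norm \<alpha> \<noteq> 1" using less.prems(2) root by auto
    define w where "w = pmul q u"
    have sw: "subexp w" unfolding w_def by (rule subexp_pmul[OF less.prems(3)])
    have e: "pmul p u = (\<lambda>n. w (n-1) - \<alpha> * w n)" unfolding w_def pq by (rule ext) (rule pmul_lin)
    have "negdecay w"
    proof (cases "norm \<alpha> < 1")
      case True then show ?thesis using step_small less.prems(4) e by metis
    next
      case False
      then have "norm \<alpha> > 1" using a1 by simp
      then show ?thesis using step_big sw less.prems(4) e by metis
    qed
    then show ?thesis unfolding w_def using less.hyps[OF dq q0 qroots less.prems(3)] by blast
  qed
qed

lemma negdecay_eventually_zero:
  assumes "\<And>k. k \<ge> K \<Longrightarrow> v (- int k) = 0"
  shows "negdecay v"
proof -
  define C where "C = (\<Sum>k<K. norm (v (- int k)) * 2^k)"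
  have "norm (v (- int k)) \<le> C * (1/2)^k" for k
  proof (cases "k < K")
    case True
    have "norm (v (- int k)) * 2^k \<le> C"
      unfolding C_def by (rule member_le_sum) (use True in auto)
    then show ?thesis by (simp add: field_simps power_one_over)
  next
    case False
    have "C \<ge> 0" unfolding C_def by (intro sum_nonneg) auto
    then show ?thesis using assms[of k] False by simp
  qed
  then show ?thesis unfolding negdecay_def by (intro exI[of _ C] exI[of _ "1/2::real"]) auto
qed

lemma negdecay_int_zero:
  fixes g :: "int \<Rightarrow> int"
  assumes "negdecay (\<lambda>n. of_int (g n))"
  shows "\<exists>m. \<forall>n<m. g n = 0"
proof -
  obtain C r where r: "0 \<le> r" "r < 1" and C: "\<And>k::nat. norm (of_int (g (- int k)) :: complex) \<le> C * r^k"
    using assms unfolding negdecay_def by blast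
  have "(\<lambda>k. C * r^k) \<longlonglongrightarrow> C * 0" using r by (intro tendsto_mult tendsto_const LIMSEQ_power_zero) auto
  then have "eventually (\<lambda>k. C * r^k < 1) sequentially" by (intro order_tendstoD) auto
  then obtain N where N: "\<And>k. k \<ge> N \<Longrightarrow> C * r^k < 1" by (auto simp: eventually_sequentially)
  have "g n = 0" if "n < - int N" for n
  proof -
    define k where "k = nat (- n)"
    have k: "k \<ge> N" "n = - int k" using that unfolding k_def by auto
    have "\<bar>real_of_int (g n)\<bar> < 1" using C[of k] N[OF k(1)] k(2) by simp
    then show ?thesis by linarith
  qed
  then show ?thesis by blast
qed

lemma ac_real_iff:
  fixes X :: "nat \<Rightarrow> real"
  shows "limsup (\<lambda>n. ereal (root n \<bar>X n\<bar>)) \<le> 1 \<longleftrightarrow> (\<forall>\<rho>>1. \<exists>C. \<forall>k. \<bar>X k\<bar> \<le> C * \<rho>^k)"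
proof
  assume L: "limsup (\<lambda>n. ereal (root n \<bar>X n\<bar>)) \<le> 1"
  show "\<forall>\<rho>>1. \<exists>C. \<forall>k. \<bar>X k\<bar> \<le> C * \<rho>^k"
  proof (intro allI impI)
    fix \<rho> :: real assume r: "\<rho> > 1"
    have "limsup (\<lambda>n. ereal (root n \<bar>X n\<bar>)) < ereal \<rho>"
    proof -
      have "(1::ereal) < ereal \<rho>" using r by simp
      then show ?thesis using L by (rule le_less_trans[rotated])
    qed
    then have "eventually (\<lambda>n. ereal (root n \<bar>X n\<bar>) < ereal \<rho>) sequentially"
      by (rule Limsup_lessD)
    then obtain N where N: "\<And>n. n \<ge> N \<Longrightarrow> root n \<bar>X n\<bar> < \<rho>"
      by (auto simp: eventually_sequentially)
    define C where "C = 1 + (\<Sum>n<N+1. \<bar>X n\<bar>)"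
    have C1: "C \<ge> 1" unfolding C_def by (simp add: sum_nonneg)
    show "\<exists>C. \<forall>k. \<bar>X k\<bar> \<le> C * \<rho>^k"
    proof (intro exI allI)
      fix k
      have rk: "\<rho>^k \<ge> 1" using r by simp
      show "\<bar>X k\<bar> \<le> C * \<rho>^k"
      proof (cases "k \<le> N")
        case True
        have "\<bar>X k\<bar> \<le> (\<Sum>n<N+1. \<bar>X n\<bar>)"
          by (rule member_le_sum) (use True in auto)
        also have "\<dots> \<le> C" unfolding C_def by simp
        also have "\<dots> \<le> C * \<rho>^k" using C1 rk mult_left_mono[of 1 "\<rho>^k" C] by simp
        finally show ?thesis .
      next
        case False
        then have k0: "k > 0" by simp
        have "root k \<bar>X k\<bar> < \<rho>" using N False by simp
        then have "(root k \<bar>X k\<bar>)^k \<le> \<rho>^k"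
          by (intro power_mono) (auto intro: real_root_ge_zero)
        then have "\<bar>X k\<bar> \<le> \<rho>^k" using k0 by (simp add: real_root_pow_pos2)
        also have "\<dots> \<le> C * \<rho>^k" using C1 rk mult_right_mono[of 1 C "\<rho>^k"] by simp
        finally show ?thesis .
      qed
    qed
  qed
next
  assume H: "\<forall>\<rho>>1. \<exists>C. \<forall>k. \<bar>X k\<bar> \<le> C * \<rho>^k"
  show "limsup (\<lambda>n. ereal (root n \<bar>X n\<bar>)) \<le> 1"
  proof (rule dense_ge)
    fix y :: ereal assume y: "1 < y"
    show "limsup (\<lambda>n. ereal (root n \<bar>X n\<bar>)) \<le> y"
    proof (cases y)
      case (real r)
      with y have r1: "r > 1" by simp
      define \<rho> where "\<rho> = sqrt r"
      have rho1: "\<rho> > 1" using r1 unfolding \<rho>_def by simp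
      have rr: "\<rho> * \<rho> = r" using r1 unfolding \<rho>_def by simp
      obtain C where C: "\<And>k. \<bar>X k\<bar> \<le> C * \<rho>^k" using H rho1 by blast
      have C0: "C \<ge> 0" using C[of 0] by simp
      have "(\<lambda>n. root n (C+1)) \<longlonglongrightarrow> 1" using C0 by (intro LIMSEQ_root_const) simp
      then have "eventually (\<lambda>n. root n (C+1) < \<rho>) sequentially"
        using rho1 by (simp add: order_tendsto_iff)
      then obtain N where N: "\<And>n. n \<ge> N \<Longrightarrow> root n (C+1) < \<rho>"
        by (auto simp: eventually_sequentially)
      have "eventually (\<lambda>n. ereal (root n \<bar>X n\<bar>) \<le> y) sequentially"
        unfolding eventually_sequentially
      proof (intro exI[of _ "N+1"] allI impI)
        fix n assume n: "n \<ge> N+1"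
        have "\<bar>X n\<bar> \<le> (C+1) * \<rho>^n" 
        proof -
          have "C*\<rho>^n \<le> (C+1)*\<rho>^n" using rho1 by (intro mult_right_mono) auto
          then show ?thesis using C[of n] by linarith
        qed
        then have "root n \<bar>X n\<bar> \<le> root n ((C+1) * \<rho>^n)"
          using n by (intro real_root_le_mono) auto
        also have "\<dots> = root n (C+1) * \<rho>"
          using n rho1 by (simp add: real_root_mult real_root_power_cancel)
        also have "\<dots> \<le> \<rho> * \<rho>" using N[of n] n rho1 by (intro mult_right_mono) auto
        finally show "ereal (root n \<bar>X n\<bar>) \<le> y" using rr real by simp
      qed
      then show ?thesis by (rule Limsup_bounded)
    qed (use y in auto)
  qed
qed

lemma ac_iff_subexp: "almost_convergent c \<longleftrightarrow> subexp (\<lambda>n. of_int (c n))"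
proof
  assume "almost_convergent c"
  then have P: "\<forall>\<rho>>1. \<exists>C. \<forall>k. \<bar>real_of_int (c (int k))\<bar> \<le> C * \<rho>^k"
    and M: "\<forall>\<rho>>1. \<exists>C. \<forall>k. \<bar>real_of_int (c (- int k))\<bar> \<le> C * \<rho>^k"
    unfolding almost_convergent_def ac_real_iff by auto
  show "subexp (\<lambda>n. of_int (c n))" unfolding subexp_def
  proof (intro allI impI)
    fix \<rho> :: real assume r: "\<rho> > 1"
    obtain C1 where C1: "\<And>k. \<bar>real_of_int (c (int k))\<bar> \<le> C1 * \<rho>^k" using P r by blast
    obtain C2 where C2: "\<And>k. \<bar>real_of_int (c (- int k))\<bar> \<le> C2 * \<rho>^k" using M r by blast
    have "norm (of_int (c n) :: complex) \<le> max C1 C2 * \<rho> ^ nat \<bar>n\<bar>" for n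
    proof (cases "n \<ge> 0")
      case True
      then have n: "n = int (nat \<bar>n\<bar>)" by simp
      have "\<bar>real_of_int (c n)\<bar> \<le> C1 * \<rho> ^ nat \<bar>n\<bar>" using C1[of "nat \<bar>n\<bar>"] n by simp
      also have "\<dots> \<le> max C1 C2 * \<rho> ^ nat \<bar>n\<bar>" using r by (intro mult_right_mono) auto
      finally show ?thesis by simp
    next
      case False
      then have n: "n = - int (nat \<bar>n\<bar>)" by simp
      have "\<bar>real_of_int (c n)\<bar> \<le> C2 * \<rho> ^ nat \<bar>n\<bar>" using C2[of "nat \<bar>n\<bar>"] n by simp
      also have "\<dots> \<le> max C1 C2 * \<rho> ^ nat \<bar>n\<bar>" using r by (intro mult_right_mono) auto
      finally show ?thesis by simp
    qed
    then show "\<exists>C. \<forall>n. norm (of_int (c n) :: complex) \<le> C * \<rho> ^ nat \<bar>n\<bar>" by blast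
  qed
next
  assume S: "subexp (\<lambda>n. of_int (c n))"
  have "\<forall>\<rho>>1. \<exists>C. \<forall>k. \<bar>real_of_int (c (int k))\<bar> \<le> C * \<rho>^k"
  proof (intro allI impI)
    fix \<rho> :: real assume "\<rho> > 1"
    then obtain C where C: "\<And>n. norm (of_int (c n) :: complex) \<le> C * \<rho> ^ nat \<bar>n\<bar>" using S unfolding subexp_def by blast
    show "\<exists>C. \<forall>k. \<bar>real_of_int (c (int k))\<bar> \<le> C * \<rho>^k"
      using C by (intro exI[of _ C] allI) (metis nat_int abs_of_nat norm_of_int)
  qed
  moreover have "\<forall>\<rho>>1. \<exists>C. \<forall>k. \<bar>real_of_int (c (- int k))\<bar> \<le> C * \<rho>^k"
  proof (intro allI impI)
    fix \<rho> :: real assume "\<rho> > 1"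
    then obtain C where C: "\<And>n. norm (of_int (c n) :: complex) \<le> C * \<rho> ^ nat \<bar>n\<bar>" using S unfolding subexp_def by blast
    show "\<exists>C. \<forall>k. \<bar>real_of_int (c (- int k))\<bar> \<le> C * \<rho>^k"
    proof (intro exI[of _ C] allI)
      fix k
      show "\<bar>real_of_int (c (- int k))\<bar> \<le> C * \<rho>^k" using C[of "- int k"] by simp
    qed
  qed
  ultimately show "almost_convergent c" unfolding almost_convergent_def ac_real_iff by auto
qed

lemma subexp_shift_sum:
  assumes "subexp u" "finite S"
  shows "subexp (\<lambda>n. \<Sum>k\<in>S. a k * u (n - k))"
  unfolding subexp_def
proof (intro allI impI)
  fix \<rho> :: real assume r: "\<rho> > 1"
  obtain C where C: "\<And>n. norm (u n) \<le> C * \<rho> ^ nat \<bar>n\<bar>" using assms r unfolding subexp_def by blast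
  have C0: "C \<ge> 0" by (rule subexp_C_nonneg[OF C])
  define D where "D = (\<Sum>k\<in>S. norm (a k) * (C * \<rho> ^ nat \<bar>k\<bar>))"
  show "\<exists>C. \<forall>n. norm (\<Sum>k\<in>S. a k * u (n - k)) \<le> C * \<rho> ^ nat \<bar>n\<bar>"
  proof (intro exI allI)
    fix n
    have "norm (\<Sum>k\<in>S. a k * u (n - k)) \<le> (\<Sum>k\<in>S. norm (a k * u (n - k)))"
      by (rule norm_sum)
    also have "\<dots> \<le> (\<Sum>k\<in>S. norm (a k) * (C * \<rho> ^ nat \<bar>k\<bar>) * \<rho> ^ nat \<bar>n\<bar>)"
    proof (rule sum_mono)
      fix k assume "k \<in> S"
      have "\<rho> ^ nat \<bar>n - k\<bar> \<le> \<rho> ^ (nat \<bar>k\<bar> + nat \<bar>n\<bar>)"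
        using r by (intro power_increasing) auto
      then have "C * \<rho> ^ nat \<bar>n - k\<bar> \<le> C * \<rho> ^ (nat \<bar>k\<bar> + nat \<bar>n\<bar>)"
        using C0 by (intro mult_left_mono)
      then have "norm (u (n - k)) \<le> C * \<rho> ^ (nat \<bar>k\<bar> + nat \<bar>n\<bar>)"
        using C[of "n - k"] by linarith
      then have "norm (u (n - k)) \<le> C * \<rho> ^ nat \<bar>k\<bar> * \<rho> ^ nat \<bar>n\<bar>"
        by (simp add: power_add mult.assoc)
      then show "norm (a k * u (n - k)) \<le> norm (a k) * (C * \<rho> ^ nat \<bar>k\<bar>) * \<rho> ^ nat \<bar>n\<bar>"
        unfolding norm_mult mult.assoc by (rule mult_left_mono) auto
    qed
    also have "\<dots> = D * \<rho> ^ nat \<bar>n\<bar>" unfolding D_def by (simp add: sum_distrib_right)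
    finally show "norm (\<Sum>k\<in>S. a k * u (n - k)) \<le> D * \<rho> ^ nat \<bar>n\<bar>" .
  qed
qed

lemma laurent_mult_Zac:
  assumes "laurent_poly f" "almost_convergent g"
  shows "almost_convergent (laurent_mult f g)"
proof -
  have "subexp (\<lambda>n. of_int (g n))" using assms(2) by (simp add: ac_iff_subexp)
  then have "subexp (\<lambda>n. \<Sum>k\<in>{k. f k \<noteq> 0}. of_int (f k) * of_int (g (n - k)))"
    using assms(1) unfolding laurent_poly_def by (intro subexp_shift_sum)
  then show ?thesis unfolding ac_iff_subexp laurent_mult_def by simp
qed

lemma laurent_mult_Zac_right:
  assumes "laurent_poly f" "g \<in> Zac_right"
  shows "laurent_mult f g \<in> Zac_right"
proof -
  from assms(2) have ac: "almost_convergent g" and "\<exists>m. \<forall>n<m. g n = 0" unfolding Zac_right_def by auto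
  then obtain m where m: "\<And>n. n < m \<Longrightarrow> g n = 0" by blast
  define S where "S = {k. f k \<noteq> 0}"
  have fS: "finite S" using assms(1) unfolding laurent_poly_def S_def .
  define M where "M = (\<Sum>k\<in>S. \<bar>k\<bar>)"
  have M: "\<And>k. k \<in> S \<Longrightarrow> \<bar>k\<bar> \<le> M" unfolding M_def using fS by (intro member_le_sum) auto
  have "laurent_mult f g n = 0" if "n < m - M" for n
    unfolding laurent_mult_def S_def[symmetric]
  proof (rule sum.neutral, intro ballI)
    fix k assume "k \<in> S"
    then have "n - k < m" using M[of k] that by linarith
    then show "f k * g (n - k) = 0" using m by simp
  qed
  then show ?thesis unfolding Zac_right_def using laurent_mult_Zac[OF assms(1) ac] by blast
qed


lemma back_to_right:
  assumes lp: "laurent_poly f" and hyp: "hyperbolic f" and gZ: "g \<in> Zac"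
    and hR: "laurent_mult f g \<in> Zac_right"
  shows "g \<in> Zac_right"
proof -
  define S where "S = {k. f k \<noteq> 0}"
  have fS: "finite S" using lp unfolding laurent_poly_def S_def .
  have Sne: "S \<noteq> {}"
  proof
    assume "S = {}"
    then have "laurent_eval f 1 = 0" unfolding laurent_eval_def S_def[symmetric] by simp
    then show False using hyp unfolding hyperbolic_def by auto
  qed
  define s where "s = Min S"
  define d where "d = nat (Max S - s)"
  have Srange: "k \<in> S \<Longrightarrow> s \<le> k \<and> k \<le> s + int d" for k
    using fS Sne unfolding s_def d_def by (auto intro: Min_le Max_ge)
  have sS: "s \<in> S" unfolding s_def using fS Sne by simp
  define a where "a j = (of_int (f (s + int j)) :: complex)" for j
  define p where "p = (\<Sum>i\<le>d. monom (a i) i)"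
  have cp: "coeff p j = a j" if "j \<le> d" for j unfolding p_def by (rule coeff_sum_monom[OF that])
  have dp: "degree p \<le> d"
    by (rule degree_le) (auto simp: p_def coeff_sum coeff_monom)
  have p0: "p \<noteq> 0"
  proof
    assume "p = 0"
    then have "coeff p 0 = 0" by simp
    then show False using cp[of 0] sS unfolding a_def S_def by simp
  qed
  have reidx: "(\<Sum>k\<in>S. of_int (f k) * \<phi> k) = (\<Sum>j\<le>d. a j * \<phi> (s + int j))" for \<phi> :: "int \<Rightarrow> complex"
  proof -
    have "(\<Sum>k\<in>S. of_int (f k) * \<phi> k) = (\<Sum>k\<in>{s..s + int d}. of_int (f k) * \<phi> k)"
      by (rule sum.mono_neutral_left) (use Srange in \<open>auto simp: S_def\<close>)
    also have "\<dots> = (\<Sum>j\<le>d. a j * \<phi> (s + int j))"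
      by (rule sum.reindex_bij_witness[where i = "\<lambda>j. s + int j" and j = "\<lambda>k. nat (k - s)"])
         (auto simp: a_def)
    finally show ?thesis .
  qed
  have roots: "\<forall>z. norm z = 1 \<longrightarrow> poly p z \<noteq> 0"
  proof (intro allI impI)
    fix z :: complex assume z1: "norm z = 1"
    then have z0: "z \<noteq> 0" by auto
    have "laurent_eval f z = (\<Sum>j\<le>d. a j * z powi (s + int j))"
      unfolding laurent_eval_def S_def[symmetric] by (rule reidx)
    also have "\<dots> = z powi s * (\<Sum>j\<le>d. a j * z ^ j)"
      using z0 by (simp add: sum_distrib_left power_int_add algebra_simps)
    also have "(\<Sum>j\<le>d. a j * z ^ j) = poly p z"
      unfolding p_def by (simp add: poly_sum poly_monom)
    finally have "laurent_eval f z = z powi s * poly p z" .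
    moreover have "laurent_eval f z \<noteq> 0" using hyp z1 unfolding hyperbolic_def by blast
    ultimately show "poly p z \<noteq> 0" by auto
  qed
  define u where "u n = (of_int (g n) :: complex)" for n
  have su: "subexp u" using gZ unfolding Zac_def u_def by (simp add: ac_iff_subexp)
  have pm: "pmul p u n = of_int (laurent_mult f g (n + s))" for n
  proof -
    have "pmul p u n = (\<Sum>j<Suc d. coeff p j * u (n - int j))"
      by (rule pmul_alt) (use dp in simp)
    also have "\<dots> = (\<Sum>j\<le>d. a j * u (n - int j))"
      unfolding lessThan_Suc_atMost by (rule sum.cong) (auto simp: cp)
    also have "\<dots> = (\<Sum>k\<in>S. of_int (f k) * u (n + s - k))"
      by (subst reidx) simp
    also have "\<dots> = of_int (laurent_mult f g (n + s))"
      unfolding laurent_mult_def S_def u_def by simp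
    finally show ?thesis .
  qed
  from hR obtain m where m: "\<And>n. n < m \<Longrightarrow> laurent_mult f g n = 0" unfolding Zac_right_def by blast
  have "negdecay (pmul p u)"
  proof (rule negdecay_eventually_zero[where K = "nat (s - m) + 1"])
    fix k :: nat assume "k \<ge> nat (s - m) + 1"
    then have "- int k + s < m" by linarith
    then show "pmul p u (- int k) = 0" unfolding pm using m by simp
  qed
  then have "negdecay u" using negdecay_poly[OF p0 roots su] by blast
  then have "\<exists>m. \<forall>n<m. g n = 0" unfolding u_def by (rule negdecay_int_zero)
  then show ?thesis using gZ unfolding Zac_def Zac_right_def by blast
qed

theorem mainTheorem2:
  fixes f :: "int \<Rightarrow> int"
  assumes "laurent_poly f" and "hyperbolic f"
  shows "laurent_mult f ` Zac \<inter> Zac_right = laurent_mult f ` Zac_right"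
proof
  show "laurent_mult f ` Zac \<inter> Zac_right \<subseteq> laurent_mult f ` Zac_right"
  proof
    fix x assume "x \<in> laurent_mult f ` Zac \<inter> Zac_right"
    then obtain g where g: "g \<in> Zac" "x = laurent_mult f g" "x \<in> Zac_right" by blast
    then have "g \<in> Zac_right" using back_to_right[OF assms] by blast
    then show "x \<in> laurent_mult f ` Zac_right" using g by blast
  qed
next
  show "laurent_mult f ` Zac_right \<subseteq> laurent_mult f ` Zac \<inter> Zac_right"
  proof
    fix x assume "x \<in> laurent_mult f ` Zac_right"
    then obtain g where g: "g \<in> Zac_right" "x = laurent_mult f g" by blast
    have "g \<in> Zac" using g(1) unfolding Zac_def Zac_right_def by blast
    moreover have "x \<in> Zac_right" using laurent_mult_Zac_right[OF assms(1) g(1)] g(2) by simp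
    ultimately show "x \<in> laurent_mult f ` Zac \<inter> Zac_right" using g by blast
  qed
qed

end
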